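(* Let $F=F_2$ be the free group on $x,y$, $F^{(1)}=[F,F]$, $F^{(2)}=[F^{(1)},F^{(1)}]$, and let $w\in F^{(1)}\setminus F^{(2)}$. Then the rational functions $\Phi_w(\lambda,\mu)$ and $\Psi_w(\lambda,\mu)$ defined below are both nonzero and are linearly independent (over $\mathbb{C}$).
   Context: Write $[a,b]=aba^{-1}b^{-1}$ and $w_{n,m}=[x^n,y^m]$ for nonzero integers $n,m$. The elements $w_{n,m}$ ($n,m\neq 0$) freely generate $F^{(1)}$, so every $w\in F^{(1)}$ has a unique shortest (reduced) expression $w=\prod_{i=1}^r w_{n_i,m_i}^{s_i}$ with $s_i\neq 0$. Let $\mathrm{Supp}(w)$ be the set of pairs $(n,m)$ for which $w_{n,m}$ occurs in this expression, and $R_w(n,m)$ the sum of the exponents $s_i$ over all occurrences of $w_{n,m}$. Define $$\Phi_w(\lambda,\mu)=\sum_{(\alpha,\beta)\in \mathrm{Supp}(w)} R_w(\alpha,\beta)\,\mathrm{sgn}(\alpha)\,(1-\mu^{2\beta})\,\frac{(\lambda^{2|\alpha|}-1)\lambda^{\alpha}}{\lambda^{|\alpha|-1}(\lambda^2-1)},$$ $$\Psi_w(\lambda,\mu)=\sum_{(\alpha,\beta)\in \mathrm{Supp}(w)} R_w(\alpha,\beta)\,\mathrm{sgn}(\beta)\,(\lambda^{2\alpha}-1)\,\frac{(\mu^{2|\beta|}-1)\mu^{\beta}}{\mu^{|\beta|-1}(\mu^2-1)}.$$ *)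

theory Defs
  imports Complex_Main "HOL-Algebra.Algebra"
begin

text \<open>A letter is a pair (g, e): g = False means generator x, g = True means y;
  e = True means the inverse of the generator.\<close>
type_synonym letter = "bool \<times> bool"

definition inv_letter :: "letter \<Rightarrow> letter" where
  "inv_letter a = (fst a, \<not> snd a)"

fun reduced_word :: "letter list \<Rightarrow> bool" where
  "reduced_word (a # b # xs) = (b \<noteq> inv_letter a \<and> reduced_word (b # xs))"
| "reduced_word _ = True"

fun push_letter :: "letter \<Rightarrow> letter list \<Rightarrow> letter list" where
  "push_letter a [] = [a]"
| "push_letter a (b # xs) = (if b = inv_letter a then xs else a # b # xs)"

definition normalize :: "letter list \<Rightarrow> letter list" where
  "normalize xs = foldr push_letter xs []"

definition F2 :: "letter list monoid" where
  "F2 = \<lparr> carrier = {w. reduced_word w}, monoid.mult = (\<lambda>u v. normalize (u @ v)), one = [] \<rparr>"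

definition gen_x :: "letter list" where "gen_x = [(False, False)]"
definition gen_y :: "letter list" where "gen_y = [(True, False)]"

text \<open>Commutator [a,b] = a b a^-1 b^-1 (same convention as HOL-Algebra's derived_set).\<close>
definition comm :: "letter list \<Rightarrow> letter list \<Rightarrow> letter list" where
  "comm a b = a \<otimes>\<^bsub>F2\<^esub> b \<otimes>\<^bsub>F2\<^esub> inv\<^bsub>F2\<^esub> a \<otimes>\<^bsub>F2\<^esub> inv\<^bsub>F2\<^esub> b"

definition F_1 :: "letter list set" where "F_1 = derived F2 (carrier F2)"
definition F_2' :: "letter list set" where "F_2' = derived F2 F_1"

definition wnm :: "int \<Rightarrow> int \<Rightarrow> letter list" where
  "wnm n m = comm (gen_x [^]\<^bsub>F2\<^esub> n) (gen_y [^]\<^bsub>F2\<^esub> m)"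

text \<open>An expression is a list of ((n_i, m_i), s_i), standing for prod_i w_{n_i,m_i}^{s_i}.\<close>
type_synonym expr = "((int \<times> int) \<times> int) list"

definition eval_expr :: "expr \<Rightarrow> letter list" where
  "eval_expr es = foldr (\<lambda>((n, m), s) acc. (wnm n m [^]\<^bsub>F2\<^esub> s) \<otimes>\<^bsub>F2\<^esub> acc) es \<one>\<^bsub>F2\<^esub>"

fun no_adjacent_repeat :: "expr \<Rightarrow> bool" where
  "no_adjacent_repeat (a # b # xs) = (fst a \<noteq> fst b \<and> no_adjacent_repeat (b # xs))"
| "no_adjacent_repeat _ = True"

definition reduced_expr :: "expr \<Rightarrow> bool" where
  "reduced_expr es \<longleftrightarrow>
     (\<forall>((n, m), s) \<in> set es. n \<noteq> 0 \<and> m \<noteq> 0 \<and> s \<noteq> 0) \<and> no_adjacent_repeat es"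

definition red_expr_of :: "letter list \<Rightarrow> expr" where
  "red_expr_of w = (THE es. reduced_expr es \<and> eval_expr es = w)"

definition Supp :: "letter list \<Rightarrow> (int \<times> int) set" where
  "Supp w = fst ` set (red_expr_of w)"

definition R :: "letter list \<Rightarrow> int \<times> int \<Rightarrow> int" where
  "R w p = sum_list (map snd (filter (\<lambda>e. fst e = p) (red_expr_of w)))"

definition Phi :: "letter list \<Rightarrow> complex \<Rightarrow> complex \<Rightarrow> complex" where
  "Phi w la mu = (\<Sum>(\<alpha>, \<beta>) \<in> Supp w.
      of_int (R w (\<alpha>, \<beta>)) * of_int (sgn \<alpha>) * (1 - mu powi (2 * \<beta>)) *
      ((la ^ (2 * nat \<bar>\<alpha>\<bar>) - 1) * la powi \<alpha>) / (la ^ (nat \<bar>\<alpha>\<bar> - 1) * (la\<^sup>2 - 1)))"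

definition Psi :: "letter list \<Rightarrow> complex \<Rightarrow> complex \<Rightarrow> complex" where
  "Psi w la mu = (\<Sum>(\<alpha>, \<beta>) \<in> Supp w.
      of_int (R w (\<alpha>, \<beta>)) * of_int (sgn \<beta>) * (la powi (2 * \<alpha>) - 1) *
      ((mu ^ (2 * nat \<bar>\<beta>\<bar>) - 1) * mu powi \<beta>) / (mu ^ (nat \<bar>\<beta>\<bar> - 1) * (mu\<^sup>2 - 1)))"

text \<open>Points where all denominators are defined and nonzero; a rational function in
  (lambda, mu) is zero iff it vanishes on this Zariski-dense open set.\<close>
definition good_pt :: "complex \<Rightarrow> complex \<Rightarrow> bool" where
  "good_pt la mu \<longleftrightarrow> la \<noteq> 0 \<and> la\<^sup>2 \<noteq> 1 \<and> mu \<noteq> 0 \<and> mu\<^sup>2 \<noteq> 1"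

end

theory Submission
  imports Defs "HOL-Library.Product_Plus"
begin


definition gil :: "'a \<times> bool \<Rightarrow> 'a \<times> bool" where "gil a = (fst a, \<not> snd a)"

lemma gil_gil[simp]: "gil (gil a) = a" by (simp add: gil_def)
lemma gil_neq[simp]: "gil a \<noteq> a" "a \<noteq> gil a" by (auto simp: gil_def prod_eq_iff)
lemma gil_inj[simp]: "gil a = gil b \<longleftrightarrow> a = b" by (auto simp: gil_def prod_eq_iff)
lemma gil_swap: "b = gil a \<longleftrightarrow> a = gil b" by auto

fun gred :: "('a \<times> bool) list \<Rightarrow> bool" where
  "gred (a # b # xs) = (b \<noteq> gil a \<and> gred (b # xs))"
| "gred _ = True"

fun gpush :: "'a \<times> bool \<Rightarrow> ('a \<times> bool) list \<Rightarrow> ('a \<times> bool) list" where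
  "gpush a [] = [a]"
| "gpush a (b # xs) = (if b = gil a then xs else a # b # xs)"

definition gnorm :: "('a \<times> bool) list \<Rightarrow> ('a \<times> bool) list" where
  "gnorm xs = foldr gpush xs []"

definition FG :: "('a \<times> bool) list monoid" where
  "FG = \<lparr> carrier = {w. gred w}, monoid.mult = (\<lambda>u v. gnorm (u @ v)), one = [] \<rparr>"

definition ginvw :: "('a \<times> bool) list \<Rightarrow> ('a \<times> bool) list" where
  "ginvw u = rev (map gil u)"

lemma gred_tl: "gred (a # w) \<Longrightarrow> gred w"
  by (cases w) auto

lemma gred_push: "gred w \<Longrightarrow> gred (gpush a w)"
  apply (cases w)
   apply simp
  subgoal for b xs by (cases xs) (auto simp: gil_swap)
  done

lemma gred_norm: "gred (gnorm xs)"
  by (induction xs) (auto simp: gnorm_def gred_push)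

lemma gpush_id: "gred (a # w) \<Longrightarrow> gpush a w = a # w"
  by (cases w) (auto simp: gil_swap)

lemma gnorm_red: "gred w \<Longrightarrow> gnorm w = w"
proof (induction w)
  case Nil then show ?case by (simp add: gnorm_def)
next
  case (Cons a w)
  then have "gnorm w = w" using gred_tl by blast
  then show ?case using Cons gpush_id by (simp add: gnorm_def)
qed

lemma gpush_cancel: "gred w \<Longrightarrow> gpush a (gpush (gil a) w) = w"
proof (cases w)
  case Nil then show ?thesis by simp
next
  case (Cons b xs)
  assume r: "gred w"
  show ?thesis
  proof (cases "b = a")
    case True
    then have "gpush (gil a) w = xs" using Cons by simp
    moreover have "gpush a xs = a # xs" using r Cons True gpush_id by simp
    ultimately show ?thesis using Cons True by simp
  next
    case False
    then show ?thesis using Cons by (auto simp: gil_swap)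
  qed
qed

abbreviation act :: "('a \<times> bool) list \<Rightarrow> ('a \<times> bool) list \<Rightarrow> ('a \<times> bool) list"
  where "act u w \<equiv> foldr gpush u w"

lemma gred_act: "gred w \<Longrightarrow> gred (act u w)"
  by (induction u) (auto simp: gred_push)

lemma act_push: "gred w \<Longrightarrow> act (gpush a t) w = gpush a (act t w)"
proof (cases t)
  case Nil then show ?thesis by simp
next
  case (Cons b t')
  assume r: "gred w"
  show ?thesis
  proof (cases "b = gil a")
    case True
    then have "gpush a (act t w) = gpush a (gpush (gil a) (act t' w))" using Cons by simp
    also have "\<dots> = act t' w" using gpush_cancel gred_act r by blast
    finally show ?thesis using Cons True by simp
  next
    case False then show ?thesis using Cons by simp
  qed
qed

lemma act_norm: "gred w \<Longrightarrow> act (gnorm u) w = act u w"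
  by (induction u) (auto simp: gnorm_def act_push)

lemma gnorm_append: "gnorm (u @ v) = act u (gnorm v)"
  by (simp add: gnorm_def)

lemma gnorm_append_red: "gred v \<Longrightarrow> gnorm (u @ v) = act u v"
  by (simp add: gnorm_append gnorm_red)

lemma act_ginvw: "gred w \<Longrightarrow> act (ginvw u) (act u w) = w"
proof (induction u arbitrary: w)
  case Nil then show ?case by (simp add: ginvw_def)
next
  case (Cons a u)
  have "act (ginvw (a # u)) (act (a # u) w) = act (ginvw u) (gpush (gil a) (gpush a (act u w)))"
    by (simp add: ginvw_def)
  also have "\<dots> = act (ginvw u) (act u w)"
    using gpush_cancel[of "act u w" "gil a"] gred_act[OF Cons.prems] by simp
  also have "\<dots> = w" using Cons by blast
  finally show ?case .
qed

lemma gred_Cons: "gred (a # u) \<longleftrightarrow> gred u \<and> (u = [] \<or> hd u \<noteq> gil a)"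
  by (cases u) auto

lemma gred_snoc: "gred (xs @ [b]) \<longleftrightarrow> gred xs \<and> (xs = [] \<or> b \<noteq> gil (last xs))"
proof (induction xs)
  case Nil then show ?case by simp
next
  case (Cons a xs)
  then show ?case by (cases xs) (auto simp: gred_Cons)
qed

lemma gred_rev: "gred (rev (map gil u)) = gred u"
proof (induction u)
  case (Cons a u)
  have e: "rev (map gil (a # u)) = rev (map gil u) @ [gil a]" by simp
  show ?case
  proof (cases u)
    case Nil then show ?thesis by simp
  next
    case (Cons b v)
    have l: "last (rev (map gil u)) = gil b" using Cons by (simp add: last_rev)
    have "gred (rev (map gil (a # u))) \<longleftrightarrow> gred u \<and> gil a \<noteq> gil (gil b)"
      unfolding e gred_snoc using Cons.IH l Cons by simp
    also have "\<dots> \<longleftrightarrow> gred (a # u)" using Cons by (auto simp: gil_swap)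
    finally show ?thesis .
  qed
qed auto

lemma FG_group: "group FG"
proof (rule groupI)
  show "x \<otimes>\<^bsub>FG\<^esub> y \<in> carrier FG" for x y by (simp add: FG_def gred_norm)
  show "\<one>\<^bsub>FG\<^esub> \<in> carrier FG" by (simp add: FG_def)
  show "(x \<otimes>\<^bsub>FG\<^esub> y) \<otimes>\<^bsub>FG\<^esub> z = x \<otimes>\<^bsub>FG\<^esub> (y \<otimes>\<^bsub>FG\<^esub> z)"
    if "x \<in> carrier FG" "y \<in> carrier FG" "z \<in> carrier FG" for x y z
  proof -
    have r: "gred x" "gred y" "gred z" using that by (auto simp: FG_def)
    have "(x \<otimes>\<^bsub>FG\<^esub> y) \<otimes>\<^bsub>FG\<^esub> z = act (gnorm (x @ y)) z"
      using r by (simp add: FG_def gnorm_append_red)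
    also have "\<dots> = act x (act y z)" using r act_norm[of z "x @ y"] by simp
    also have "\<dots> = x \<otimes>\<^bsub>FG\<^esub> (y \<otimes>\<^bsub>FG\<^esub> z)"
      using r gred_act[OF r(3), of y] gnorm_append_red[of "act y z" x] gnorm_append_red[of z y]
      by (simp add: FG_def)
    finally show ?thesis .
  qed
  show "\<one>\<^bsub>FG\<^esub> \<otimes>\<^bsub>FG\<^esub> x = x" if "x \<in> carrier FG" for x
    using that by (simp add: FG_def gnorm_red)
  show "\<exists>y\<in>carrier FG. y \<otimes>\<^bsub>FG\<^esub> x = \<one>\<^bsub>FG\<^esub>" if "x \<in> carrier FG" for x
  proof (intro bexI)
    have r: "gred x" using that by (simp add: FG_def)
    have "gnorm (ginvw x @ x) = act (ginvw x) (act x [])"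
      using r by (simp add: gnorm_append gnorm_red[of "[]"] ) (metis gnorm_def gnorm_red)
    also have "\<dots> = []" by (rule act_ginvw) simp
    finally show "ginvw x \<otimes>\<^bsub>FG\<^esub> x = \<one>\<^bsub>FG\<^esub>" by (simp add: FG_def)
    show "ginvw x \<in> carrier FG" using r by (simp add: FG_def ginvw_def gred_rev)
  qed
qed

interpretation FGg: group "FG :: ('a \<times> bool) list monoid" by (rule FG_group)

lemma FG_simps: "carrier FG = {w. gred w}" "x \<otimes>\<^bsub>FG\<^esub> y = gnorm (x @ y)" "\<one>\<^bsub>FG\<^esub> = []"
  by (auto simp: FG_def)

lemma ginvw_ginvw[simp]: "ginvw (ginvw u) = u" by (simp add: ginvw_def rev_map comp_def)

lemma gred_ginvw[simp]: "gred (ginvw u) = gred u" by (simp add: ginvw_def gred_rev)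

lemma FG_inv: "gred x \<Longrightarrow> inv\<^bsub>FG\<^esub> x = ginvw x"
proof -
  assume r: "gred x"
  have "gnorm (ginvw x @ x) = act (ginvw x) (act x [])"
    using r by (metis gnorm_append gnorm_def gnorm_red)
  also have "\<dots> = []" by (rule act_ginvw) simp
  finally have "ginvw x \<otimes>\<^bsub>FG\<^esub> x = \<one>\<^bsub>FG\<^esub>" by (simp add: FG_simps)
  then show ?thesis using r FGg.inv_equality[of "ginvw x" x] by (simp add: FG_simps)
qed

lemma act_cancel2: "gred w \<Longrightarrow> act xs (act (ginvw xs) w) = w"
  using act_ginvw[of w "ginvw xs"] by simp

lemma gnorm_cancel: "gnorm (xs @ ginvw xs @ ys) = gnorm ys"
  by (simp add: gnorm_append act_cancel2 gred_norm)

lemma gnorm_gnorm_left: "gnorm (gnorm u @ v) = gnorm (u @ v)"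
  by (simp add: gnorm_append act_norm gred_norm)

lemma gnorm_gnorm_right: "gnorm (u @ gnorm v) = gnorm (u @ v)"
  by (simp add: gnorm_append gnorm_red gred_norm)

lemma gred_replicate: "gred (replicate n c)"
  by (induction n) (auto simp: gred_Cons)

lemma FG_pow_nat: "[c] [^]\<^bsub>FG\<^esub> (n::nat) = replicate n c"
proof (induction n)
  case 0 then show ?case by (simp add: FG_simps)
next
  case (Suc n)
  have "replicate n c @ [c] = replicate (Suc n) c" by (simp add: replicate_append_same)
  then show ?case using Suc gnorm_red[OF gred_replicate[of "Suc n" c]] by (simp add: FG_simps)
qed

lemma ginvw_replicate: "ginvw (replicate n c) = replicate n (gil c)"
  by (simp add: ginvw_def)

lemma FG_pow_int: "[c] [^]\<^bsub>FG\<^esub> (k::int) =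
   (if k \<ge> 0 then replicate (nat k) c else replicate (nat (-k)) (gil c))"
  by (simp add: int_pow_def2 FG_pow_nat FG_inv gred_replicate ginvw_replicate)


lemma inv_letter_eq: "inv_letter = gil"
  by (rule ext) (simp add: inv_letter_def gil_def)

lemma reduced_word_eq: "reduced_word = gred"
proof (rule ext)
  fix w show "reduced_word w = gred w"
    by (induction w rule: reduced_word.induct) (auto simp: inv_letter_eq)
qed

lemma push_letter_eq: "push_letter = gpush"
proof (intro ext)
  fix a w show "push_letter a w = gpush a w"
    by (cases w) (auto simp: inv_letter_eq)
qed

lemma normalize_eq: "normalize = gnorm"
  by (rule ext) (simp add: normalize_def gnorm_def push_letter_eq)

lemma F2_eq: "F2 = FG"
  by (simp add: F2_def FG_def reduced_word_eq normalize_eq)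

interpretation F: group F2 unfolding F2_eq by (rule FG_group)

definition dl :: "letter \<Rightarrow> int \<times> int" where
  "dl l = (let s = (if snd l then -1 else 1) in if fst l then (0, s) else (s, 0))"

definition pos :: "letter list \<Rightarrow> int \<times> int" where
  "pos u = sum_list (map dl u)"

lemma dl_gil[simp]: "dl (gil a) = - dl a"
  by (cases a) (auto simp: dl_def gil_def)

lemma pos_simps[simp]: "pos [] = 0" "pos (a # u) = dl a + pos u" "pos (u @ v) = pos u + pos v"
  by (auto simp: pos_def)

lemma pos_gpush: "pos (gpush a w) = dl a + pos w"
  by (cases w) auto

lemma pos_gnorm[simp]: "pos (gnorm u) = pos u"
  by (induction u) (auto simp: gnorm_def pos_gpush)

lemma pos_mult: "pos (u \<otimes>\<^bsub>F2\<^esub> v) = pos u + pos v"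
  by (simp add: F2_eq FG_simps)

lemma pos_inv: "u \<in> carrier F2 \<Longrightarrow> pos (inv\<^bsub>F2\<^esub> u) = - pos u"
proof -
  assume u: "u \<in> carrier F2"
  have "pos (inv\<^bsub>F2\<^esub> u \<otimes>\<^bsub>F2\<^esub> u) = pos (\<one>\<^bsub>F2\<^esub>)" using u by simp
  then show ?thesis by (simp add: pos_mult F2_eq FG_simps eq_neg_iff_add_eq_0)
qed

definition K :: "letter list set" where "K = {u \<in> carrier F2. pos u = 0}"

lemma K_subgroup: "subgroup K F2"
proof
  show "K \<subseteq> carrier F2" by (auto simp: K_def)
  show "x \<otimes>\<^bsub>F2\<^esub> y \<in> K" if "x \<in> K" "y \<in> K" for x y
    using that by (auto simp: K_def pos_mult)
  show "\<one>\<^bsub>F2\<^esub> \<in> K" by (simp add: K_def F2_eq FG_simps)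
  show "inv\<^bsub>F2\<^esub> x \<in> K" if "x \<in> K" for x
    using that by (auto simp: K_def pos_inv)
qed

lemma F_1_sub_K: "F_1 \<subseteq> K"
  unfolding F_1_def derived_def
proof (rule F.generate_subgroup_incl[OF _ K_subgroup])
  show "derived_set F2 (carrier F2) \<subseteq> K"
    by (auto simp: K_def pos_mult pos_inv)
qed


type_synonym sym = "(int \<times> int) \<times> bool"

definition sig :: "int \<times> int \<Rightarrow> sym list" where
  "sig q = (if fst q = 0 \<or> snd q = 0 then [] else [(q, False)])"

definition tlp :: "int \<times> int \<Rightarrow> sym list" where
  "tlp q = ginvw (sig q) @ sig (fst q + 1, snd q)"

definition tstep :: "int \<times> int \<Rightarrow> letter \<Rightarrow> sym list" where
  "tstep q l = (if fst l then [] else if snd l then ginvw (tlp (fst q - 1, snd q)) else tlp q)"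

fun tau :: "int \<times> int \<Rightarrow> letter list \<Rightarrow> sym list" where
  "tau q [] = []"
| "tau q (l # u) = tstep q l @ tau (q + dl l) u"

lemma tau_append: "tau q (u @ v) = tau q u @ tau (q + pos u) v"
  by (induction u arbitrary: q) (auto simp: add.assoc)

lemma ginvw_Nil[simp]: "ginvw [] = []" by (simp add: ginvw_def)

lemma tstep_gil: "tstep (q + dl a) (gil a) = ginvw (tstep q a)"
  by (cases a; cases q) (auto simp: tstep_def dl_def gil_def ginvw_Nil)

lemma gnorm_cons_app: "gnorm (xs @ ys) = act xs (gnorm ys)"
  by (simp add: gnorm_append)

lemma tau_gpush: "gred w \<Longrightarrow> gnorm (tau q (gpush a w)) = gnorm (tstep q a @ tau (q + dl a) w)"
proof (cases w)
  case Nil then show ?thesis by simp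
next
  case (Cons b w')
  show ?thesis
  proof (cases "b = gil a")
    case True
    have "tau (q + dl a) w = ginvw (tstep q a) @ tau q w'"
      using Cons True by (simp add: tstep_gil)
    then show ?thesis using Cons True
      by (simp add: gnorm_cancel)
  next
    case False then show ?thesis using Cons by simp
  qed
qed

lemma tau_gnorm: "gnorm (tau q (gnorm u)) = gnorm (tau q u)"
proof (induction u arbitrary: q)
  case Nil then show ?case by (simp add: gnorm_def)
next
  case (Cons a u)
  have "gnorm (tau q (gnorm (a # u))) = gnorm (tau q (gpush a (gnorm u)))"
    by (simp add: gnorm_def)
  also have "\<dots> = gnorm (tstep q a @ tau (q + dl a) (gnorm u))"
    by (rule tau_gpush[OF gred_norm])
  also have "\<dots> = act (tstep q a) (gnorm (tau (q + dl a) (gnorm u)))"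
    by (simp add: gnorm_append)
  also have "\<dots> = act (tstep q a) (gnorm (tau (q + dl a) u))" using Cons by simp
  also have "\<dots> = gnorm (tau q (a # u))" by (simp add: gnorm_append)
  finally show ?case .
qed

definition TT :: "letter list \<Rightarrow> sym list" where "TT u = gnorm (tau 0 u)"

lemma TT_carrier: "TT u \<in> carrier FG"
  by (simp add: TT_def FG_simps gred_norm)

lemma TT_mult: "pos u = 0 \<Longrightarrow> TT (u \<otimes>\<^bsub>F2\<^esub> v) = TT u \<otimes>\<^bsub>FG\<^esub> TT v"
proof -
  assume p: "pos u = 0"
  have "TT (u \<otimes>\<^bsub>F2\<^esub> v) = gnorm (tau 0 (gnorm (u @ v)))" by (simp add: TT_def F2_eq FG_simps)
  also have "\<dots> = gnorm (tau 0 u @ tau 0 v)" using p by (simp only: tau_gnorm tau_append) simp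
  also have "\<dots> = gnorm (gnorm (tau 0 u) @ gnorm (tau 0 v))" by (simp only: gnorm_gnorm_left gnorm_gnorm_right)
  finally show ?thesis by (simp add: TT_def FG_simps)
qed

lemma TT_one: "TT \<one>\<^bsub>F2\<^esub> = \<one>\<^bsub>FG\<^esub>"
  by (simp add: TT_def F2_eq FG_simps gnorm_def)

lemma K_pos: "u \<in> K \<Longrightarrow> pos u = 0" "u \<in> K \<Longrightarrow> u \<in> carrier F2"
  by (auto simp: K_def)

lemma K_pow_nat: "u \<in> K \<Longrightarrow> u [^]\<^bsub>F2\<^esub> (n::nat) \<in> K"
proof (induction n)
  case 0 then show ?case using subgroup.one_closed[OF K_subgroup] by (simp only: nat_pow_0)
next
  case (Suc n) then show ?case using subgroup.m_closed[OF K_subgroup] by (simp only: nat_pow_Suc)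
qed

lemma K_pow_int: "u \<in> K \<Longrightarrow> u [^]\<^bsub>F2\<^esub> (k::int) \<in> K"
  unfolding int_pow_def2 using K_pow_nat subgroup.m_inv_closed[OF K_subgroup] by presburger

lemma TT_pow_nat: "u \<in> K \<Longrightarrow> TT (u [^]\<^bsub>F2\<^esub> (n::nat)) = TT u [^]\<^bsub>FG\<^esub> n"
proof (induction n)
  case 0 then show ?case by (simp only: nat_pow_0 TT_one)
next
  case (Suc n)
  have "u [^]\<^bsub>F2\<^esub> n \<in> K" using Suc.prems K_pow_nat by blast
  then have "TT (u [^]\<^bsub>F2\<^esub> n \<otimes>\<^bsub>F2\<^esub> u) = TT (u [^]\<^bsub>F2\<^esub> n) \<otimes>\<^bsub>FG\<^esub> TT u"
    using TT_mult K_pos by blast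
  then show ?case using Suc by (simp only: nat_pow_Suc)
qed

lemma TT_inv: "u \<in> K \<Longrightarrow> TT (inv\<^bsub>F2\<^esub> u) = inv\<^bsub>FG\<^esub> (TT u)"
proof -
  assume u: "u \<in> K"
  have i: "inv\<^bsub>F2\<^esub> u \<in> K" using u subgroup.m_inv_closed[OF K_subgroup] by blast
  have "TT (inv\<^bsub>F2\<^esub> u \<otimes>\<^bsub>F2\<^esub> u) = TT (inv\<^bsub>F2\<^esub> u) \<otimes>\<^bsub>FG\<^esub> TT u"
    using TT_mult K_pos(1)[OF i] by blast
  moreover have "inv\<^bsub>F2\<^esub> u \<otimes>\<^bsub>F2\<^esub> u = \<one>\<^bsub>F2\<^esub>" using K_pos(2)[OF u] by (rule F.l_inv)
  ultimately have "TT (inv\<^bsub>F2\<^esub> u) \<otimes>\<^bsub>FG\<^esub> TT u = \<one>\<^bsub>FG\<^esub>" using TT_one by simp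
  then show ?thesis using FGg.inv_equality TT_carrier by metis
qed

lemma TT_pow_int: "u \<in> K \<Longrightarrow> TT (u [^]\<^bsub>F2\<^esub> (k::int)) = TT u [^]\<^bsub>FG\<^esub> k"
proof -
  assume u: "u \<in> K"
  show ?thesis
  proof (cases "k < 0")
    case True
    then show ?thesis using u K_pow_nat TT_inv TT_pow_nat by (simp only: int_pow_def2 if_True)
  next
    case False
    then show ?thesis using u TT_pow_nat by (simp only: int_pow_def2 if_False)
  qed
qed


definition pw :: "letter \<Rightarrow> int \<Rightarrow> letter list" where
  "pw c k = (if k \<ge> 0 then replicate (nat k) c else replicate (nat (-k)) (gil c))"

lemma F2_simps: "carrier F2 = {w. gred w}" "x \<otimes>\<^bsub>F2\<^esub> y = gnorm (x @ y)" "\<one>\<^bsub>F2\<^esub> = []"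
  by (simp_all add: F2_eq FG_simps)

lemma F2_inv: "gred x \<Longrightarrow> inv\<^bsub>F2\<^esub> x = ginvw x"
  by (simp add: F2_eq FG_inv)

lemma F2_pow: "[c] [^]\<^bsub>F2\<^esub> (k::int) = pw c k"
  by (simp add: F2_eq FG_pow_int pw_def)

lemma gred_pw: "gred (pw c k)"
  by (simp add: pw_def gred_replicate)

lemma ginvw_pw: "ginvw (pw c k) = pw c (-k)"
  by (auto simp: pw_def ginvw_replicate)

lemma pos_replicate: "pos (replicate n c) = (int n * fst (dl c), int n * snd (dl c))"
  by (induction n) (auto simp: algebra_simps zero_prod_def plus_prod_def)

definition cx :: letter where "cx = (False, False)"
definition cy :: letter where "cy = (True, False)"

lemma dl_c: "dl cx = (1, 0)" "dl cy = (0, 1)" by (auto simp: dl_def cx_def cy_def)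

lemma pos_pw: "pos (pw cx k) = (k, 0)" "pos (pw cy k) = (0, k)"
  by (auto simp: pw_def pos_replicate dl_c cx_def cy_def gil_def dl_def)

lemma wnm_list: "wnm n m = gnorm (pw cx n @ pw cy m @ pw cx (-n) @ pw cy (-m))"
proof -
  have gx: "gen_x [^]\<^bsub>F2\<^esub> n = pw cx n" using F2_pow by (simp add: gen_x_def cx_def)
  have gy: "gen_y [^]\<^bsub>F2\<^esub> m = pw cy m" using F2_pow by (simp add: gen_y_def cy_def)
  show ?thesis
    unfolding wnm_def comm_def gx gy
    by (simp add: F2_simps F2_inv gred_pw ginvw_pw gnorm_gnorm_left)
qed

lemma tau_y: "tau q (replicate k (True, e)) = []"
  by (induction k arbitrary: q) (auto simp: tstep_def)

lemma tau_pw_y: "tau q (pw cy k) = []"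
  by (simp add: pw_def cy_def gil_def tau_y)

lemma ginvw_append: "ginvw (u @ v) = ginvw v @ ginvw u" by (simp add: ginvw_def)

lemma gnorm_Nil[simp]: "gnorm [] = []" by (simp add: gnorm_def)

lemma gnorm_inv_self: "gnorm (ginvw s @ s) = []"
  using gnorm_cancel[of "ginvw s" "[]"] by (simp add: gnorm_def)

lemma tele_x: "gnorm (tau (a, b) (replicate k cx)) = gnorm (ginvw (sig (a, b)) @ sig (a + int k, b))"
proof (induction k arbitrary: a)
  case 0 then show ?case by (simp add: gnorm_inv_self)
next
  case (Suc k)
  have "gnorm (tau (a, b) (replicate (Suc k) cx)) = act (tlp (a, b)) (gnorm (tau (a + 1, b) (replicate k cx)))"
    by (simp add: gnorm_append tstep_def cx_def dl_c[unfolded cx_def])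
  also have "\<dots> = act (ginvw (sig (a, b))) (act (sig (a + 1, b)) (act (ginvw (sig (a + 1, b))) (gnorm (sig (a + 1 + int k, b)))))"
    using Suc by (simp add: tlp_def gnorm_append)
  also have "\<dots> = gnorm (ginvw (sig (a, b)) @ sig (a + int (Suc k), b))"
    by (simp add: act_cancel2 gred_norm gnorm_append add.assoc)
  finally show ?case .
qed

lemma tele_xi: "gnorm (tau (a, b) (replicate k (gil cx))) = gnorm (ginvw (sig (a, b)) @ sig (a - int k, b))"
proof (induction k arbitrary: a)
  case 0 then show ?case by (simp add: gnorm_inv_self)
next
  case (Suc k)
  have "gnorm (tau (a, b) (replicate (Suc k) (gil cx))) = act (ginvw (tlp (a - 1, b))) (gnorm (tau (a - 1, b) (replicate k (gil cx))))"
    by (simp add: gnorm_append tstep_def cx_def gil_def dl_def)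
  also have "\<dots> = act (ginvw (sig (a, b))) (act (sig (a - 1, b)) (act (ginvw (sig (a - 1, b))) (gnorm (sig (a - 1 - int k, b)))))"
    using Suc by (simp add: tlp_def gnorm_append ginvw_append)
  also have "\<dots> = gnorm (ginvw (sig (a, b)) @ sig (a - int (Suc k), b))"
    by (simp add: act_cancel2 gred_norm gnorm_append algebra_simps)
  finally show ?case .
qed

lemma tele_pw: "gnorm (tau (a, b) (pw cx k)) = gnorm (ginvw (sig (a, b)) @ sig (a + k, b))"
  by (auto simp: pw_def tele_x tele_xi)

lemma wnm_K: "wnm n m \<in> K"
proof -
  have "wnm n m \<in> carrier F2" by (simp add: F2_simps wnm_list gred_norm)
  moreover have "pos (wnm n m) = 0" by (simp add: wnm_list pos_pw dl_c zero_prod_def)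
  ultimately show ?thesis by (simp add: K_def)
qed

lemma TT_wnm: "n \<noteq> 0 \<Longrightarrow> m \<noteq> 0 \<Longrightarrow> TT (wnm n m) = [((n, m), True)]"
proof -
  assume nm: "n \<noteq> 0" "m \<noteq> 0"
  have "TT (wnm n m) = gnorm (tau 0 (pw cx n) @ tau (n, 0) (pw cy m) @ tau (n, m) (pw cx (-n)) @ tau (0, m) (pw cy (-m)))"
    by (simp add: TT_def wnm_list tau_gnorm tau_append pos_pw dl_c zero_prod_def plus_prod_def)
  also have "\<dots> = gnorm (gnorm (tau (0,0) (pw cx n)) @ gnorm (tau (n, m) (pw cx (-n))))"
    by (simp add: tau_pw_y gnorm_gnorm_left gnorm_gnorm_right zero_prod_def)
  also have "\<dots> = [((n, m), True)]"
    using nm by (simp add: tele_pw sig_def ginvw_def gil_def gnorm_red)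
  finally show ?thesis .
qed


lemma eval_Nil[simp]: "eval_expr [] = \<one>\<^bsub>F2\<^esub>" by (simp add: eval_expr_def)
lemma eval_Cons[simp]: "eval_expr (((n, m), s) # r) = wnm n m [^]\<^bsub>F2\<^esub> s \<otimes>\<^bsub>F2\<^esub> eval_expr r"
  by (simp add: eval_expr_def)

lemma eval_K: "eval_expr es \<in> K"
proof (induction es)
  case Nil then show ?case using subgroup.one_closed[OF K_subgroup] by simp
next
  case (Cons e r)
  obtain n m s where e: "e = ((n, m), s)" by (metis prod.exhaust)
  show ?case using Cons e subgroup.m_closed[OF K_subgroup] K_pow_int[OF wnm_K] by simp
qed

lemma eval_carrier: "eval_expr es \<in> carrier F2" using eval_K K_pos by blast

lemma eval_append: "eval_expr (a @ b) = eval_expr a \<otimes>\<^bsub>F2\<^esub> eval_expr b"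
proof (induction a)
  case Nil then show ?case using eval_carrier by simp
next
  case (Cons e r)
  obtain n m s where e: "e = ((n, m), s)" by (metis prod.exhaust)
  have c: "wnm n m [^]\<^bsub>F2\<^esub> s \<in> carrier F2" using K_pow_int[OF wnm_K] K_pos by blast
  show ?case using Cons e c eval_carrier by (simp add: F.m_assoc)
qed

definition run :: "int \<times> int \<Rightarrow> int \<Rightarrow> sym list" where
  "run p s = (if s \<ge> 0 then replicate (nat s) (p, True) else replicate (nat (-s)) (p, False))"

fun Nw :: "expr \<Rightarrow> sym list" where
  "Nw [] = []"
| "Nw ((p, s) # r) = run p s @ Nw r"

lemma gred_append: "gred (u @ v) \<longleftrightarrow> gred u \<and> gred v \<and> (u = [] \<or> v = [] \<or> hd v \<noteq> gil (last u))"
proof (induction u)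
  case Nil then show ?case by simp
next
  case (Cons a u)
  then show ?case by (cases u; cases v) (auto simp: gred_Cons)
qed

lemma reduced_expr_Cons: "reduced_expr (e # r) \<longleftrightarrow>
   (snd e \<noteq> 0 \<and> fst (fst e) \<noteq> 0 \<and> snd (fst e) \<noteq> 0) \<and> reduced_expr r \<and> (r = [] \<or> fst (hd r) \<noteq> fst e)"
  by (cases r) (auto simp: reduced_expr_def split: prod.splits)

lemma run_ne: "s \<noteq> 0 \<Longrightarrow> run p s \<noteq> []" by (auto simp: run_def)
lemma run_red: "gred (run p s)" by (simp add: run_def gred_replicate)
lemma run_set: "l \<in> set (run p s) \<Longrightarrow> fst l = p" by (auto simp: run_def split: if_splits)

lemma Nw_props: "reduced_expr es \<Longrightarrow> gred (Nw es) \<and> (es = [] \<longleftrightarrow> Nw es = []) \<and>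
   (es \<noteq> [] \<longrightarrow> fst (hd (Nw es)) = fst (hd es))"
proof (induction es)
  case Nil then show ?case by simp
next
  case (Cons e r)
  obtain p s where e: "e = (p, s)" by (metis prod.exhaust)
  have R: "s \<noteq> 0" "reduced_expr r" "r = [] \<or> fst (hd r) \<noteq> p" using Cons.prems e by (auto simp: reduced_expr_Cons)
  have IH: "gred (Nw r)" "r = [] \<longleftrightarrow> Nw r = []" "r \<noteq> [] \<longrightarrow> fst (hd (Nw r)) = fst (hd r)"
    using Cons.IH R(2) by auto
  have ne: "run p s \<noteq> []" using R run_ne by blast
  have lst: "fst (last (run p s)) = p" using ne run_set last_in_set by blast
  have j: "Nw r = [] \<or> hd (Nw r) \<noteq> gil (last (run p s))"
  proof (cases "r = []")
    case False
    then have "fst (hd (Nw r)) \<noteq> p" using IH R by auto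
    then show ?thesis using lst by (auto simp: gil_def)
  qed (use IH in auto)
  have "gred (run p s @ Nw r)" using gred_append run_red IH j by blast
  moreover have "fst (hd (run p s @ Nw r)) = p" using ne run_set[OF hd_in_set[OF ne]] by (simp add: hd_append)
  ultimately show ?case using e ne by simp
qed

lemma TT_eval: "reduced_expr es \<Longrightarrow> TT (eval_expr es) = Nw es"
proof (induction es)
  case Nil then show ?case using TT_one by (simp add: FG_simps)
next
  case (Cons e r)
  obtain n m s where e: "e = ((n, m), s)" by (metis prod.exhaust)
  have R: "n \<noteq> 0" "m \<noteq> 0" "reduced_expr r" using Cons.prems e by (auto simp: reduced_expr_Cons)
  have "TT (eval_expr (e # r)) = TT (wnm n m [^]\<^bsub>F2\<^esub> s) \<otimes>\<^bsub>FG\<^esub> TT (eval_expr r)"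
    using e TT_mult K_pos K_pow_int[OF wnm_K] by simp
  also have "\<dots> = gnorm (run (n, m) s @ Nw r)"
    using Cons.IH R TT_pow_int[OF wnm_K] TT_wnm by (simp add: FG_pow_int FG_simps run_def gil_def)
  also have "\<dots> = Nw (e # r)" using Nw_props[OF Cons.prems] e by (simp add: gnorm_red)
  finally show ?case .
qed

lemma run_inj: "s \<noteq> 0 \<Longrightarrow> t \<noteq> 0 \<Longrightarrow> run p s = run p t \<Longrightarrow> s = t"
proof -
  assume a: "s \<noteq> 0" "t \<noteq> 0" "run p s = run p t"
  have L: "length (run p x) = nat \<bar>x\<bar>" for x by (simp add: run_def)
  have H: "x \<noteq> 0 \<Longrightarrow> snd (hd (run p x)) = (x > 0)" for x
    by (auto simp: run_def hd_replicate)
  have "nat \<bar>s\<bar> = nat \<bar>t\<bar>" using L a by metis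
  moreover have "(s > 0) = (t > 0)" using H a by metis
  ultimately show "s = t" using a by (auto simp: abs_if split: if_splits)
qed

lemma takeWhile_run: "(xs = [] \<or> fst (hd xs) \<noteq> p) \<Longrightarrow> takeWhile (\<lambda>l. fst l = p) (run p s @ xs) = run p s"
  using run_set by (cases xs) (auto simp: takeWhile_append2 takeWhile_tail)

lemma Nw_inj: "reduced_expr es1 \<Longrightarrow> reduced_expr es2 \<Longrightarrow> Nw es1 = Nw es2 \<Longrightarrow> es1 = es2"
proof (induction es1 arbitrary: es2)
  case Nil then show ?case using Nw_props by metis
next
  case (Cons e r1)
  obtain p s where e: "e = (p, s)" by (metis prod.exhaust)
  have "es2 \<noteq> []" using Cons.prems Nw_props by (metis list.distinct(1))
  then obtain q t r2 where e2: "es2 = (q, t) # r2" by (metis list.exhaust prod.exhaust)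
  have R1: "s \<noteq> 0" "reduced_expr r1" "r1 = [] \<or> fst (hd r1) \<noteq> p" using Cons.prems(1) e by (auto simp: reduced_expr_Cons)
  have R2: "t \<noteq> 0" "reduced_expr r2" "r2 = [] \<or> fst (hd r2) \<noteq> q" using Cons.prems(2) e2 by (auto simp: reduced_expr_Cons)
  have h1: "Nw r1 = [] \<or> fst (hd (Nw r1)) \<noteq> p" using Nw_props[OF R1(2)] R1(3) by auto
  have h2: "Nw r2 = [] \<or> fst (hd (Nw r2)) \<noteq> q" using Nw_props[OF R2(2)] R2(3) by auto
  have pq: "p = q"
    using Nw_props[OF Cons.prems(1)] Nw_props[OF Cons.prems(2)] Cons.prems(3) e e2 by auto
  have eq: "run p s @ Nw r1 = run p t @ Nw r2" using Cons.prems(3) e e2 pq by simp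
  have "run p s = run p t"
    using takeWhile_run[OF h1, of s] takeWhile_run[of "Nw r2" p t] h2 pq eq by metis
  then have st: "s = t" using run_inj R1 R2 by blast
  then have "Nw r1 = Nw r2" using eq by simp
  then have "r1 = r2" using Cons.IH R1 R2 by blast
  then show ?case using e e2 pq st by simp
qed

lemma expr_unique: "reduced_expr es1 \<Longrightarrow> reduced_expr es2 \<Longrightarrow> eval_expr es1 = eval_expr es2 \<Longrightarrow> es1 = es2"
  using Nw_inj TT_eval by metis



context group begin
lemma cancel1: "x \<in> carrier G \<Longrightarrow> y \<in> carrier G \<Longrightarrow> x \<otimes> (inv x \<otimes> y) = y"
  by (metis inv_closed m_assoc r_inv l_one)
lemma cancel2: "x \<in> carrier G \<Longrightarrow> y \<in> carrier G \<Longrightarrow> inv x \<otimes> (x \<otimes> y) = y"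
  by (metis inv_closed m_assoc l_inv l_one)

lemma comm_identity0:
  assumes "A \<in> carrier G" "B \<in> carrier G" "H \<in> carrier G"
  shows "(A \<otimes> H \<otimes> inv A \<otimes> inv H) \<otimes> inv (B \<otimes> H \<otimes> inv B \<otimes> inv H) \<otimes> B \<otimes> H
         = A \<otimes> H \<otimes> inv A \<otimes> B"
proof -
  have i: "inv (B \<otimes> H \<otimes> inv B \<otimes> inv H) = H \<otimes> B \<otimes> inv H \<otimes> inv B"
    using assms by (simp add: inv_mult_group m_assoc)
  show ?thesis unfolding i using assms by (simp add: m_assoc cancel1 cancel2)
qed

lemma comm_identity:
  assumes "A \<in> carrier G" "E \<in> carrier G" "H \<in> carrier G"
  shows "(A \<otimes> H \<otimes> inv A \<otimes> inv H) \<otimes> inv ((A \<otimes> E) \<otimes> H \<otimes> inv (A \<otimes> E) \<otimes> inv H) \<otimes> (A \<otimes> E) \<otimes> H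
         = A \<otimes> H \<otimes> E"
  using comm_identity0[of A "A \<otimes> E" H] assms by (simp add: m_assoc cancel2)
end

lemma gen_carrier: "gen_x \<in> carrier F2" "gen_y \<in> carrier F2"
  by (simp_all add: F2_simps gen_x_def gen_y_def)

lemma wnm_zero: "wnm 0 m = \<one>\<^bsub>F2\<^esub>" "wnm n 0 = \<one>\<^bsub>F2\<^esub>"
  using gen_carrier by (simp_all add: wnm_def comm_def)

definition epush :: "((int \<times> int) \<times> int) \<Rightarrow> expr \<Rightarrow> expr" where
  "epush e es = (if fst (fst e) = 0 \<or> snd (fst e) = 0 \<or> snd e = 0 then es else
     (case es of [] \<Rightarrow> [e] | f # r \<Rightarrow>
        if fst f = fst e then (if snd e + snd f = 0 then r else (fst e, snd e + snd f) # r)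
        else e # f # r))"

lemma wpow_carrier: "wnm n m [^]\<^bsub>F2\<^esub> (s::int) \<in> carrier F2"
  using K_pow_int[OF wnm_K] K_pos by blast

lemma eval_epush: "eval_expr (epush e es) = eval_expr (e # es)"
proof -
  obtain n m s where e: "e = ((n, m), s)" by (metis prod.exhaust)
  show ?thesis
  proof (cases "n = 0 \<or> m = 0 \<or> s = 0")
    case True
    then show ?thesis using e eval_carrier by (auto simp: epush_def wnm_zero)
  next
    case False
    show ?thesis
    proof (cases es)
      case Nil then show ?thesis using e False by (simp add: epush_def)
    next
      case (Cons f r)
      obtain p t where f: "f = (p, t)" by (metis prod.exhaust)
      have merge: "wnm n m [^]\<^bsub>F2\<^esub> s \<otimes>\<^bsub>F2\<^esub> (wnm n m [^]\<^bsub>F2\<^esub> t \<otimes>\<^bsub>F2\<^esub> eval_expr r)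
           = wnm n m [^]\<^bsub>F2\<^esub> (s + t) \<otimes>\<^bsub>F2\<^esub> eval_expr r"
        using wpow_carrier eval_carrier wnm_K K_pos
        by (simp add: F.int_pow_mult F.m_assoc[symmetric])
      show ?thesis
        using e False Cons f merge eval_carrier
        by (auto simp: epush_def)
    qed
  qed
qed

lemma reduced_epush: "reduced_expr es \<Longrightarrow> reduced_expr (epush e es)"
proof -
  assume r: "reduced_expr es"
  obtain n m s where e: "e = ((n, m), s)" by (metis prod.exhaust)
  show ?thesis
  proof (cases "n = 0 \<or> m = 0 \<or> s = 0")
    case True then show ?thesis using r e by (auto simp: epush_def)
  next
    case False
    show ?thesis
    proof (cases es)
      case Nil then show ?thesis using e False by (simp add: epush_def reduced_expr_def)
    next
      case (Cons f r')
      obtain p t where f: "f = (p, t)" by (metis prod.exhaust)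
      have rr: "reduced_expr r'" "r' = [] \<or> fst (hd r') \<noteq> p" using r Cons f by (auto simp: reduced_expr_Cons)
      show ?thesis
        using e False Cons f r rr by (auto simp: epush_def reduced_expr_Cons)
    qed
  qed
qed

definition enorm :: "expr \<Rightarrow> expr" where "enorm es = foldr epush es []"

lemma enorm_props: "reduced_expr (enorm es) \<and> eval_expr (enorm es) = eval_expr es"
proof (induction es)
  case Nil then show ?case by (simp add: enorm_def reduced_expr_def)
next
  case (Cons e r)
  obtain n m s where e: "e = ((n, m), s)" by (metis prod.exhaust)
  have "enorm (e # r) = epush e (enorm r)" by (simp add: enorm_def)
  then show ?case using Cons reduced_epush eval_epush e by simp
qed


lemma letter_cases: "l = cx \<or> l = gil cx \<or> l = cy \<or> l = gil cy"
  by (cases l) (auto simp: cx_def cy_def gil_def)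

lemma single_pow: "[c] = [c] [^]\<^bsub>F2\<^esub> (1::int)" "[gil c] = [c] [^]\<^bsub>F2\<^esub> (-1::int)"
  by (simp_all add: F2_pow pw_def)

lemma gx: "gen_x = [cx]" "gen_y = [cy]" by (simp_all add: gen_x_def gen_y_def cx_def cy_def)

lemma c_carrier: "[c] \<in> carrier F2" by (simp add: F2_simps)

lemma step_y:
  assumes E: "E \<in> carrier F2" and e: "e = 1 \<or> e = -1"
  shows "E \<otimes>\<^bsub>F2\<^esub> [cx] [^]\<^bsub>F2\<^esub> a \<otimes>\<^bsub>F2\<^esub> [cy] [^]\<^bsub>F2\<^esub> b \<otimes>\<^bsub>F2\<^esub> [cy] [^]\<^bsub>F2\<^esub> (e::int)
       = E \<otimes>\<^bsub>F2\<^esub> [cx] [^]\<^bsub>F2\<^esub> (a::int) \<otimes>\<^bsub>F2\<^esub> [cy] [^]\<^bsub>F2\<^esub> (b + e::int)"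
  using E c_carrier by (simp add: F.int_pow_mult F.m_assoc)

lemma step_x:
  assumes E: "E \<in> carrier F2"
  shows "E \<otimes>\<^bsub>F2\<^esub> [cx] [^]\<^bsub>F2\<^esub> a \<otimes>\<^bsub>F2\<^esub> [cy] [^]\<^bsub>F2\<^esub> b \<otimes>\<^bsub>F2\<^esub> [cx] [^]\<^bsub>F2\<^esub> (e::int)
       = E \<otimes>\<^bsub>F2\<^esub> eval_expr [((a, b), 1), ((a + e, b), -1)] \<otimes>\<^bsub>F2\<^esub> [cx] [^]\<^bsub>F2\<^esub> (a + e) \<otimes>\<^bsub>F2\<^esub> [cy] [^]\<^bsub>F2\<^esub> (b::int)"
proof -
  define AA where "AA = [cx] [^]\<^bsub>F2\<^esub> a"
  define XX where "XX = [cx] [^]\<^bsub>F2\<^esub> e"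
  define HH where "HH = [cy] [^]\<^bsub>F2\<^esub> b"
  have c: "AA \<in> carrier F2" "XX \<in> carrier F2" "HH \<in> carrier F2" using c_carrier by (simp_all add: AA_def XX_def HH_def)
  have AX: "[cx] [^]\<^bsub>F2\<^esub> (a + e) = AA \<otimes>\<^bsub>F2\<^esub> XX" using c_carrier by (simp add: AA_def XX_def F.int_pow_mult)
  have W1: "wnm a b = AA \<otimes>\<^bsub>F2\<^esub> HH \<otimes>\<^bsub>F2\<^esub> inv\<^bsub>F2\<^esub> AA \<otimes>\<^bsub>F2\<^esub> inv\<^bsub>F2\<^esub> HH"
    by (simp add: wnm_def comm_def gx AA_def HH_def)
  have W2: "wnm (a + e) b = (AA \<otimes>\<^bsub>F2\<^esub> XX) \<otimes>\<^bsub>F2\<^esub> HH \<otimes>\<^bsub>F2\<^esub> inv\<^bsub>F2\<^esub> (AA \<otimes>\<^bsub>F2\<^esub> XX) \<otimes>\<^bsub>F2\<^esub> inv\<^bsub>F2\<^esub> HH"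
    by (simp add: wnm_def comm_def gx AX[symmetric] HH_def)
  have wc: "wnm n m \<in> carrier F2" for n m using wnm_K K_pos by blast
  have ev: "eval_expr [((a, b), 1), ((a + e, b), -1)] = wnm a b \<otimes>\<^bsub>F2\<^esub> inv\<^bsub>F2\<^esub> (wnm (a + e) b)"
    using wc by (simp add: F.int_pow_neg[of _ 1, simplified])
  have key: "wnm a b \<otimes>\<^bsub>F2\<^esub> inv\<^bsub>F2\<^esub> (wnm (a + e) b) \<otimes>\<^bsub>F2\<^esub> (AA \<otimes>\<^bsub>F2\<^esub> XX) \<otimes>\<^bsub>F2\<^esub> HH = AA \<otimes>\<^bsub>F2\<^esub> HH \<otimes>\<^bsub>F2\<^esub> XX"
    unfolding W1 W2 using F.comm_identity[OF c(1) c(2) c(3)] .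
  have "E \<otimes>\<^bsub>F2\<^esub> (wnm a b \<otimes>\<^bsub>F2\<^esub> inv\<^bsub>F2\<^esub> (wnm (a + e) b)) \<otimes>\<^bsub>F2\<^esub> (AA \<otimes>\<^bsub>F2\<^esub> XX) \<otimes>\<^bsub>F2\<^esub> HH
      = E \<otimes>\<^bsub>F2\<^esub> (wnm a b \<otimes>\<^bsub>F2\<^esub> inv\<^bsub>F2\<^esub> (wnm (a + e) b) \<otimes>\<^bsub>F2\<^esub> (AA \<otimes>\<^bsub>F2\<^esub> XX) \<otimes>\<^bsub>F2\<^esub> HH)"
    using E c wc by (simp add: F.m_assoc)
  also have "\<dots> = E \<otimes>\<^bsub>F2\<^esub> AA \<otimes>\<^bsub>F2\<^esub> HH \<otimes>\<^bsub>F2\<^esub> XX"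
    unfolding key using E c by (simp add: F.m_assoc)
  finally show ?thesis unfolding ev AX by (simp add: AA_def HH_def XX_def)
qed

lemma decomp: "gred u \<Longrightarrow> \<exists>es. u = eval_expr es \<otimes>\<^bsub>F2\<^esub> [cx] [^]\<^bsub>F2\<^esub> fst (pos u) \<otimes>\<^bsub>F2\<^esub> [cy] [^]\<^bsub>F2\<^esub> snd (pos u)"
proof (induction u rule: rev_induct)
  case Nil
  show ?case by (rule exI[of _ "[]"]) (simp add: F2_simps)
next
  case (snoc l u)
  have ru: "gred u" using snoc.prems gred_append by blast
  obtain es where es: "u = eval_expr es \<otimes>\<^bsub>F2\<^esub> [cx] [^]\<^bsub>F2\<^esub> fst (pos u) \<otimes>\<^bsub>F2\<^esub> [cy] [^]\<^bsub>F2\<^esub> snd (pos u)"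
    using snoc.IH ru by blast
  have ul: "u @ [l] = u \<otimes>\<^bsub>F2\<^esub> [l]" using snoc.prems by (simp add: F2_simps gnorm_red)
  define a where "a = fst (pos u)"
  define b where "b = snd (pos u)"
  have E: "eval_expr es \<in> carrier F2" by (rule eval_carrier)
  have es': "u \<otimes>\<^bsub>F2\<^esub> [l] = eval_expr es \<otimes>\<^bsub>F2\<^esub> [cx] [^]\<^bsub>F2\<^esub> a \<otimes>\<^bsub>F2\<^esub> [cy] [^]\<^bsub>F2\<^esub> b \<otimes>\<^bsub>F2\<^esub> [l]"
    using es unfolding a_def b_def by metis
  have "l = cx \<or> l = gil cx \<or> l = cy \<or> l = gil cy" by (rule letter_cases)
  then show ?case
  proof (elim disjE)
    assume l: "l = cx"
    have lx: "[l] = [cx] [^]\<^bsub>F2\<^esub> (1::int)" using l by (simp add: F2_pow pw_def)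
    have "u @ [l] = eval_expr es \<otimes>\<^bsub>F2\<^esub> [cx] [^]\<^bsub>F2\<^esub> a \<otimes>\<^bsub>F2\<^esub> [cy] [^]\<^bsub>F2\<^esub> b \<otimes>\<^bsub>F2\<^esub> [cx] [^]\<^bsub>F2\<^esub> (1::int)"
      unfolding ul unfolding es' unfolding lx by (rule refl)
    also have "\<dots> = eval_expr (es @ [((a, b), 1), ((a + 1, b), -1)]) \<otimes>\<^bsub>F2\<^esub> [cx] [^]\<^bsub>F2\<^esub> (a + 1) \<otimes>\<^bsub>F2\<^esub> [cy] [^]\<^bsub>F2\<^esub> b"
      using step_x[OF E, of a b "1"] by (simp add: eval_append)
    finally have "u @ [l] = eval_expr (es @ [((a, b), 1), ((a + 1, b), -1)]) \<otimes>\<^bsub>F2\<^esub> [cx] [^]\<^bsub>F2\<^esub> (a + 1) \<otimes>\<^bsub>F2\<^esub> [cy] [^]\<^bsub>F2\<^esub> b" .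
    moreover have "pos (u @ [l]) = (a + 1, b)" using l by (simp add: a_def b_def dl_c plus_prod_def)
    ultimately show ?case by auto
  next
    assume l: "l = gil cx"
    have lx: "[l] = [cx] [^]\<^bsub>F2\<^esub> (-1::int)" using l by (simp add: F2_pow pw_def)
    have "u @ [l] = eval_expr es \<otimes>\<^bsub>F2\<^esub> [cx] [^]\<^bsub>F2\<^esub> a \<otimes>\<^bsub>F2\<^esub> [cy] [^]\<^bsub>F2\<^esub> b \<otimes>\<^bsub>F2\<^esub> [cx] [^]\<^bsub>F2\<^esub> (-1::int)"
      unfolding ul unfolding es' unfolding lx by (rule refl)
    also have "\<dots> = eval_expr (es @ [((a, b), 1), ((a + -1, b), -1)]) \<otimes>\<^bsub>F2\<^esub> [cx] [^]\<^bsub>F2\<^esub> (a + -1) \<otimes>\<^bsub>F2\<^esub> [cy] [^]\<^bsub>F2\<^esub> b"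
      using step_x[OF E, of a b "-1"] by (simp add: eval_append)
    finally have "u @ [l] = eval_expr (es @ [((a, b), 1), ((a + -1, b), -1)]) \<otimes>\<^bsub>F2\<^esub> [cx] [^]\<^bsub>F2\<^esub> (a + -1) \<otimes>\<^bsub>F2\<^esub> [cy] [^]\<^bsub>F2\<^esub> b" .
    moreover have "pos (u @ [l]) = (a + -1, b)" using l by (simp add: a_def b_def dl_c plus_prod_def)
    ultimately show ?case by auto
  next
    assume l: "l = cy"
    have lx: "[l] = [cy] [^]\<^bsub>F2\<^esub> (1::int)" using l by (simp add: F2_pow pw_def)
    have "u @ [l] = eval_expr es \<otimes>\<^bsub>F2\<^esub> [cx] [^]\<^bsub>F2\<^esub> a \<otimes>\<^bsub>F2\<^esub> [cy] [^]\<^bsub>F2\<^esub> b \<otimes>\<^bsub>F2\<^esub> [cy] [^]\<^bsub>F2\<^esub> (1::int)"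
      unfolding ul unfolding es' unfolding lx by (rule refl)
    also have "\<dots> = eval_expr es \<otimes>\<^bsub>F2\<^esub> [cx] [^]\<^bsub>F2\<^esub> a \<otimes>\<^bsub>F2\<^esub> [cy] [^]\<^bsub>F2\<^esub> (b + 1)"
      using step_y[OF E, of "1" a b] by simp
    finally have "u @ [l] = eval_expr es \<otimes>\<^bsub>F2\<^esub> [cx] [^]\<^bsub>F2\<^esub> a \<otimes>\<^bsub>F2\<^esub> [cy] [^]\<^bsub>F2\<^esub> (b + 1)" .
    moreover have "pos (u @ [l]) = (a, b + 1)" using l by (simp add: a_def b_def dl_c plus_prod_def)
    ultimately show ?case by auto
  next
    assume l: "l = gil cy"
    have lx: "[l] = [cy] [^]\<^bsub>F2\<^esub> (-1::int)" using l by (simp add: F2_pow pw_def)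
    have "u @ [l] = eval_expr es \<otimes>\<^bsub>F2\<^esub> [cx] [^]\<^bsub>F2\<^esub> a \<otimes>\<^bsub>F2\<^esub> [cy] [^]\<^bsub>F2\<^esub> b \<otimes>\<^bsub>F2\<^esub> [cy] [^]\<^bsub>F2\<^esub> (-1::int)"
      unfolding ul unfolding es' unfolding lx by (rule refl)
    also have "\<dots> = eval_expr es \<otimes>\<^bsub>F2\<^esub> [cx] [^]\<^bsub>F2\<^esub> a \<otimes>\<^bsub>F2\<^esub> [cy] [^]\<^bsub>F2\<^esub> (b + -1)"
      using step_y[OF E, of "-1" a b] by simp
    finally have "u @ [l] = eval_expr es \<otimes>\<^bsub>F2\<^esub> [cx] [^]\<^bsub>F2\<^esub> a \<otimes>\<^bsub>F2\<^esub> [cy] [^]\<^bsub>F2\<^esub> (b + -1)" .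
    moreover have "pos (u @ [l]) = (a, b + -1)" using l by (simp add: a_def b_def dl_c plus_prod_def)
    ultimately show ?case by auto
  qed
qed

lemma exists_expr: "u \<in> K \<Longrightarrow> \<exists>es. reduced_expr es \<and> eval_expr es = u"
proof -
  assume u: "u \<in> K"
  then have "gred u" "pos u = 0" by (auto simp: K_def F2_simps)
  then obtain es where "u = eval_expr es \<otimes>\<^bsub>F2\<^esub> [cx] [^]\<^bsub>F2\<^esub> (0::int) \<otimes>\<^bsub>F2\<^esub> [cy] [^]\<^bsub>F2\<^esub> (0::int)"
    using decomp by (fastforce simp: zero_prod_def)
  then have "u = eval_expr es" using eval_carrier by simp
  then show ?thesis using enorm_props by metis
qed

lemma red_expr_of: "u \<in> K \<Longrightarrow> reduced_expr (red_expr_of u) \<and> eval_expr (red_expr_of u) = u"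
proof -
  assume u: "u \<in> K"
  have "\<exists>!es. reduced_expr es \<and> eval_expr es = u" using exists_expr[OF u] expr_unique by metis
  then show ?thesis unfolding red_expr_of_def by (rule theI')
qed


lemma F_1_carrier: "F_1 \<subseteq> carrier F2" using F_1_sub_K K_pos by blast

lemma F_1_subgroup: "subgroup F_1 F2"
  unfolding F_1_def by (rule F.derived_is_subgroup) simp

lemma D_subgroup: "subgroup F_2' F2"
  unfolding F_2'_def by (rule F.derived_is_subgroup[OF F_1_carrier])

lemma wnm_F1: "wnm n m \<in> F_1"
proof -
  have "gen_x [^]\<^bsub>F2\<^esub> n \<in> carrier F2" "gen_y [^]\<^bsub>F2\<^esub> m \<in> carrier F2" using gen_carrier by auto
  then have "wnm n m \<in> derived_set F2 (carrier F2)" unfolding wnm_def comm_def by blast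
  then show ?thesis unfolding F_1_def derived_def by (rule generate.incl)
qed

lemma wpow_F1: "wnm n m [^]\<^bsub>F2\<^esub> (s::int) \<in> F_1"
  by (rule F.subgroup_int_pow_closed[OF F_1_subgroup wnm_F1])

lemma eval_F1: "eval_expr es \<in> F_1"
proof (induction es)
  case Nil then show ?case using subgroup.one_closed[OF F_1_subgroup] by simp
next
  case (Cons e r)
  obtain n m s where e: "e = ((n, m), s)" by (metis prod.exhaust)
  show ?case using Cons e subgroup.m_closed[OF F_1_subgroup] wpow_F1 by simp
qed

context group begin
lemma comm_swap: "a \<in> carrier G \<Longrightarrow> b \<in> carrier G \<Longrightarrow> z \<in> carrier G \<Longrightarrow>
  a \<otimes> (b \<otimes> z) = (a \<otimes> b \<otimes> inv a \<otimes> inv b) \<otimes> (b \<otimes> (a \<otimes> z))"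
  by (simp add: m_assoc cancel1 cancel2)
end

definition cnt :: "expr \<Rightarrow> int \<times> int \<Rightarrow> int" where
  "cnt es p = sum_list (map snd (filter (\<lambda>e. fst e = p) es))"

lemma cnt_simps: "cnt [] q = 0" "cnt ((p, s) # r) q = (if p = q then s else 0) + cnt r q"
  "cnt (a @ b) q = cnt a q + cnt b q"
  by (auto simp: cnt_def)

lemma zero_cnt_D: "(\<forall>q. cnt es q = 0) \<Longrightarrow> eval_expr es \<in> F_2'"
proof (induction "length es" arbitrary: es rule: less_induct)
  case less
  show ?case
  proof (cases es)
    case Nil then show ?thesis using subgroup.one_closed[OF D_subgroup] by simp
  next
    case (Cons e r)
    obtain p s where e: "e = (p, s)" by (metis prod.exhaust)
    obtain n m where p: "p = (n, m)" by (metis prod.exhaust)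
    show ?thesis
    proof (cases "s = 0")
      case True
      have "\<forall>q. cnt r q = 0"
      proof
        fix q show "cnt r q = 0" using less.prems[rule_format, of q] Cons e True by (auto simp: cnt_simps split: if_splits)
      qed
      then have "eval_expr r \<in> F_2'" using less.hyps Cons by simp
      then show ?thesis using Cons e p True eval_carrier by simp
    next
      case False
      have "cnt r p = - s" using less.prems[rule_format, of p] Cons e by (simp add: cnt_simps)
      then have "\<exists>x\<in>set r. fst x = p" using False unfolding cnt_def
        by (metis (mono_tags, lifting) filter_False list.simps(8) neg_equal_0_iff_equal sum_list.Nil)
      then obtain r1 f r2 where r: "r = r1 @ f # r2" "fst f = p" by (metis split_list)
      obtain t where f: "f = (p, t)" using r(2) by (metis prod.collapse)
      define es' where "es' = r1 @ (p, s + t) # r2"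
      have "\<forall>q. cnt es' q = 0"
      proof
        fix q show "cnt es' q = 0"
          using less.prems[rule_format, of q] Cons e r f by (auto simp: es'_def cnt_simps)
      qed
      moreover have "length es' < length es" using Cons r by (simp add: es'_def)
      ultimately have D: "eval_expr es' \<in> F_2'" using less.hyps by blast
      define a where "a = wnm n m [^]\<^bsub>F2\<^esub> s"
      define z where "z = wnm n m [^]\<^bsub>F2\<^esub> t \<otimes>\<^bsub>F2\<^esub> eval_expr r2"
      have aF: "a \<in> F_1" "eval_expr r1 \<in> F_1" using wpow_F1 eval_F1 by (auto simp: a_def)
      have cz: "z \<in> carrier F2" using wpow_carrier eval_carrier by (simp add: z_def)
      have ca: "a \<in> carrier F2" "eval_expr r1 \<in> carrier F2" using aF F_1_carrier by auto
      have ev: "eval_expr es = a \<otimes>\<^bsub>F2\<^esub> (eval_expr r1 \<otimes>\<^bsub>F2\<^esub> z)"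
        using Cons e p r f by (simp add: eval_append a_def z_def)
      have ev': "eval_expr es' = eval_expr r1 \<otimes>\<^bsub>F2\<^esub> (a \<otimes>\<^bsub>F2\<^esub> z)"
        using wnm_K K_pos eval_carrier
        by (simp add: es'_def p eval_append a_def z_def F.int_pow_mult F.m_assoc)
      have cm: "a \<otimes>\<^bsub>F2\<^esub> eval_expr r1 \<otimes>\<^bsub>F2\<^esub> inv\<^bsub>F2\<^esub> a \<otimes>\<^bsub>F2\<^esub> inv\<^bsub>F2\<^esub> (eval_expr r1) \<in> F_2'"
        unfolding F_2'_def derived_def using aF by (intro generate.incl) blast
      show ?thesis unfolding ev F.comm_swap[OF ca cz]
        using subgroup.m_closed[OF D_subgroup cm] D ev' by simp
    qed
  qed
qed

lemma R_nonzero: "w \<in> F_1 \<Longrightarrow> w \<notin> F_2' \<Longrightarrow> \<exists>p \<in> Supp w. R w p \<noteq> 0"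
proof (rule ccontr)
  assume w: "w \<in> F_1" "w \<notin> F_2'" and c: "\<not> (\<exists>p \<in> Supp w. R w p \<noteq> 0)"
  have wk: "w \<in> K" using w F_1_sub_K by blast
  have "\<forall>q. cnt (red_expr_of w) q = 0"
  proof
    fix q show "cnt (red_expr_of w) q = 0"
    proof (cases "q \<in> Supp w")
      case True then show ?thesis using c by (simp add: R_def cnt_def)
    next
      case False
      then have "filter (\<lambda>e. fst e = q) (red_expr_of w) = []"
        by (auto simp: Supp_def filter_empty_conv)
      then show ?thesis by (simp add: cnt_def)
    qed
  qed
  then have "eval_expr (red_expr_of w) \<in> F_2'" by (rule zero_cnt_D)
  then show False using red_expr_of[OF wk] w by simp
qed


lemma laurent_zero:
  fixes b :: "'i \<Rightarrow> complex" and e :: "'i \<Rightarrow> int"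
  assumes I: "finite I" and XS: "finite XS"
    and Z: "\<And>z. z \<notin> XS \<Longrightarrow> (\<Sum>i\<in>I. b i * z powi e i) = 0"
  shows "(\<Sum>i\<in>I. if e i = k then b i else 0) = 0"
proof -
  define N where "N = nat (Max (insert 0 ((\<lambda>i. - e i) ` I)))"
  have N: "e i + int N \<ge> 0" if "i \<in> I" for i
  proof -
    have "- e i \<le> Max (insert 0 ((\<lambda>i. - e i) ` I))" using I that by (intro Max_ge) auto
    then show ?thesis unfolding N_def by linarith
  qed
  define M where "M = nat (Max (insert 0 ((\<lambda>i. e i + int N) ` I)))"
  have M: "nat (e i + int N) \<le> M" if "i \<in> I" for i
  proof -
    have "e i + int N \<le> Max (insert 0 ((\<lambda>i. e i + int N) ` I))" using I that by (intro Max_ge) auto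
    then show ?thesis unfolding M_def by linarith
  qed
  define cf where "cf j = (\<Sum>i\<in>I. if nat (e i + int N) = j then b i else 0)" for j
  have P: "(\<Sum>j\<le>M. cf j * z ^ j) = 0" if z: "z \<notin> XS \<union> {0}" for z
  proof -
    have "(\<Sum>j\<le>M. cf j * z ^ j) = (\<Sum>i\<in>I. \<Sum>j\<le>M. (if nat (e i + int N) = j then b i else 0) * z ^ j)"
      unfolding cf_def by (simp add: sum_distrib_right sum.swap[of _ I])
    also have "\<dots> = (\<Sum>i\<in>I. b i * z ^ nat (e i + int N))"
    proof (rule sum.cong[OF refl])
      fix i assume i: "i \<in> I"
      have "(\<Sum>j\<le>M. (if nat (e i + int N) = j then b i else 0) * z ^ j)
          = (\<Sum>j\<le>M. if nat (e i + int N) = j then b i * z ^ j else 0)"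
        by (rule sum.cong) auto
      also have "\<dots> = b i * z ^ nat (e i + int N)" using M[OF i] by (simp add: sum.delta)
      finally show "(\<Sum>j\<le>M. (if nat (e i + int N) = j then b i else 0) * z ^ j) = b i * z ^ nat (e i + int N)" .
    qed
    also have "\<dots> = (\<Sum>i\<in>I. b i * z powi e i) * z ^ N"
    proof -
      have "b i * z ^ nat (e i + int N) = b i * z powi e i * z ^ N" if i: "i \<in> I" for i
      proof -
        have "z ^ nat (e i + int N) = z powi (e i + int N)" using N[OF i] by (simp add: power_int_nonneg_exp)
        also have "\<dots> = z powi e i * z powi int N" using z by (simp add: power_int_add)
        finally show ?thesis by simp
      qed
      then show ?thesis unfolding sum_distrib_right by (intro sum.cong) auto
    qed
    also have "\<dots> = 0" using Z z by simp
    finally show ?thesis .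
  qed
  have cf0: "\<forall>j\<le>M. cf j = 0"
  proof (rule ccontr)
    assume "\<not> (\<forall>j\<le>M. cf j = 0)"
    then have fin: "finite {z. (\<Sum>j\<le>M. cf j * z ^ j) = 0}" using polyfun_finite_roots by blast
    have "UNIV - (XS \<union> {0}) \<subseteq> {z. (\<Sum>j\<le>M. cf j * z ^ j) = 0}" using P by blast
    moreover have "infinite (UNIV - (XS \<union> {0}) :: complex set)"
      using XS infinite_UNIV_char_0 by (simp add: Diff_infinite_finite)
    ultimately show False using fin finite_subset by blast
  qed
  show ?thesis
  proof (cases "k + int N \<ge> 0 \<and> nat (k + int N) \<le> M")
    case True
    have "(\<Sum>i\<in>I. if e i = k then b i else 0) = cf (nat (k + int N))"
      unfolding cf_def
    proof (rule sum.cong[OF refl])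
      fix i assume i: "i \<in> I"
      have "(e i = k) = (nat (e i + int N) = nat (k + int N))" using N[OF i] True by auto
      then show "(if e i = k then b i else 0) = (if nat (e i + int N) = nat (k + int N) then b i else 0)" by simp
    qed
    then show ?thesis using cf0 True by simp
  next
    case False
    have "e i \<noteq> k" if "i \<in> I" for i using N[OF that] M[OF that] False by auto
    then show ?thesis by simp
  qed
qed


lemma sum_bool_prod: "finite S \<Longrightarrow> (\<Sum>i\<in>S \<times> (UNIV::bool set). f i) = (\<Sum>p\<in>S. f (p, True) + f (p, False))"
proof -
  assume S: "finite S"
  have "(\<Sum>p\<in>S. \<Sum>t\<in>(UNIV::bool set). f (p, t)) = (\<Sum>(p, t)\<in>S \<times> UNIV. f (p, t))"
    by (rule sum.cartesian_product)
  then show ?thesis by (simp add: UNIV_bool add.commute)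
qed

lemma G_nonzero:
  fixes c :: "int \<times> int \<Rightarrow> complex"
  assumes S: "finite S" and nz: "\<And>p. p \<in> S \<Longrightarrow> fst p \<noteq> 0 \<and> snd p \<noteq> 0"
    and p0: "p0 \<in> S" "c p0 \<noteq> 0"
  shows "\<exists>u v. u \<notin> {0, 1} \<and> v \<notin> {0, 1} \<and>
     (\<Sum>p\<in>S. c p * (u powi fst p - 1) * (v powi snd p - 1)) \<noteq> 0"
proof (rule ccontr)
  assume "\<not> ?thesis"
  then have G0: "\<And>u v. u \<notin> {0, 1} \<Longrightarrow> v \<notin> {0, 1} \<Longrightarrow> (\<Sum>p\<in>S. c p * (u powi fst p - 1) * (v powi snd p - 1)) = 0"
    by blast
  obtain a0 b0 where p0e: "p0 = (a0, b0)" by (cases p0)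
  have b0: "b0 \<noteq> 0" "a0 \<noteq> 0" using nz[OF p0(1)] p0e by auto
  have outer: "(\<Sum>p\<in>S. if snd p = b0 then c p * (u powi fst p - 1) else 0) = 0" if u: "u \<notin> {0, 1}" for u
  proof -
    define b where "b i = (if snd i then c (fst i) * (u powi fst (fst i) - 1) else - (c (fst i) * (u powi fst (fst i) - 1)))" for i :: "(int \<times> int) \<times> bool"
    define e where "e i = (if snd i then snd (fst i) else 0)" for i :: "(int \<times> int) \<times> bool"
    have "(\<Sum>i\<in>S \<times> UNIV. if e i = b0 then b i else 0) = 0"
    proof (rule laurent_zero[of _ "{0, 1}"])
      show "finite (S \<times> (UNIV :: bool set))" using S by simp
      show "finite {0, 1 :: complex}" by simp
      fix v :: complex assume v: "v \<notin> {0, 1}"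
      have "(\<Sum>i\<in>S \<times> UNIV. b i * v powi e i) = (\<Sum>p\<in>S. c p * (u powi fst p - 1) * (v powi snd p - 1))"
        using S by (simp add: sum_bool_prod b_def e_def algebra_simps)
      then show "(\<Sum>i\<in>S \<times> UNIV. b i * v powi e i) = 0" using G0[OF u v] by simp
    qed
    then show ?thesis using S b0 unfolding b_def e_def by (simp add: sum_bool_prod cong: if_cong)
  qed
  define b where "b i = (if snd (fst i) = b0 then (if snd i then c (fst i) else - c (fst i)) else 0)" for i :: "(int \<times> int) \<times> bool"
  define e where "e i = (if snd i then fst (fst i) else 0)" for i :: "(int \<times> int) \<times> bool"
  have "(\<Sum>i\<in>S \<times> UNIV. if e i = a0 then b i else 0) = 0"
  proof (rule laurent_zero[of _ "{0, 1}"])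
    show "finite (S \<times> (UNIV :: bool set))" using S by simp
    show "finite {0, 1 :: complex}" by simp
    fix u :: complex assume u: "u \<notin> {0, 1}"
    have "(\<Sum>i\<in>S \<times> UNIV. b i * u powi e i) = (\<Sum>p\<in>S. if snd p = b0 then c p * (u powi fst p - 1) else 0)"
      using S by (intro trans[OF sum_bool_prod[OF S]] sum.cong) (auto simp: b_def e_def algebra_simps)
    then show "(\<Sum>i\<in>S \<times> UNIV. b i * u powi e i) = 0" using outer[OF u] by simp
  qed
  moreover have "(\<Sum>i\<in>S \<times> UNIV. if e i = a0 then b i else 0) = (\<Sum>p\<in>S. if p = p0 then c p else 0)"
    using S b0 by (intro trans[OF sum_bool_prod[OF S]] sum.cong) (auto simp: b_def e_def p0e prod_eq_iff)
  moreover have "(\<Sum>p\<in>S. if p = p0 then c p else 0) = c p0" using S p0 by (simp add: sum.delta')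
  ultimately show False using p0 by simp
qed


lemma core_neg_aux:
  fixes la P :: complex
  assumes "la \<noteq> 0" "P \<noteq> 0"
  shows "- ((((la * P) * (la * P)) - 1) * inverse (la * P)) / P = (inverse ((la * P) * (la * P)) - 1) * la"
  using assms by (simp add: divide_simps)

lemma core:
  fixes la :: complex
  assumes la: "la \<noteq> 0" and a: "\<alpha> \<noteq> 0"
  shows "of_int (sgn \<alpha>) * ((la ^ (2 * nat \<bar>\<alpha>\<bar>) - 1) * la powi \<alpha>) / la ^ (nat \<bar>\<alpha>\<bar> - 1) = (la powi (2 * \<alpha>) - 1) * la"
proof (cases "\<alpha> > 0")
  case True
  define j where "j = nat \<alpha> - 1"
  have j: "\<alpha> = int (Suc j)" using True by (simp add: j_def)
  have e1: "la powi \<alpha> = la ^ Suc j" using j power_int_of_nat by metis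
  have e2: "la powi (2 * \<alpha>) = la ^ (2 * Suc j)" using j by (metis of_nat_mult of_nat_numeral power_int_of_nat)
  have n: "nat \<bar>\<alpha>\<bar> - 1 = j" "nat \<bar>\<alpha>\<bar> = Suc j" using j by simp_all
  have s: "sgn \<alpha> = 1" using True by simp
  have q: "la ^ Suc j / la ^ j = la" using la by simp
  have "of_int (sgn \<alpha>) * ((la ^ (2 * nat \<bar>\<alpha>\<bar>) - 1) * la powi \<alpha>) / la ^ (nat \<bar>\<alpha>\<bar> - 1)
      = (la ^ (2 * Suc j) - 1) * (la ^ Suc j / la ^ j)"
    unfolding e1 n s by simp
  then show ?thesis unfolding q e2 .
next
  case False
  define j where "j = nat (- \<alpha>) - 1"
  have j: "\<alpha> = - int (Suc j)" using False a by (simp add: j_def)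
  have e1: "la powi \<alpha> = inverse (la * la ^ j)" unfolding j power_int_minus power_int_of_nat by simp
  have t: "2 * \<alpha> = - int (Suc j + Suc j)" using j by simp
  have e2: "la powi (2 * \<alpha>) = inverse ((la * la ^ j) * (la * la ^ j))"
    unfolding t power_int_minus power_int_of_nat by (simp add: power_add)
  have n: "nat \<bar>\<alpha>\<bar> - 1 = j" "2 * nat \<bar>\<alpha>\<bar> = Suc j + Suc j" using j by simp_all
  have s: "sgn \<alpha> = -1" using j by simp
  have p: "la ^ (Suc j + Suc j) = (la * la ^ j) * (la * la ^ j)" by (simp add: power_add)
  show ?thesis unfolding e1 e2 n s p using core_neg_aux[OF la, of "la ^ j"] la by simp
qed


lemma re1: fixes C s Y Nn D1 D2 :: complex shows "C * s * Y * Nn / (D1 * D2) = C * Y * (s * Nn / D1) / D2"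
proof -
  have "C * s * Y * Nn / (D1 * D2) = (C * Y) * (s * Nn) / (D1 * D2)" by (simp only: mult_ac)
  also have "\<dots> = (C * Y) * ((s * Nn) / (D1 * D2))" by (rule times_divide_eq_right[symmetric])
  also have "\<dots> = (C * Y) * ((s * Nn) / D1 / D2)" by (simp only: divide_divide_eq_left)
  also have "\<dots> = C * Y * (s * Nn / D1) / D2" by (simp only: times_divide_eq_right)
  finally show ?thesis .
qed

lemma t1: fixes C A B la D :: complex shows "C * (1 - B) * ((A - 1) * la) / D = - (la / D) * (C * (A - 1) * (B - 1))"
  by (simp add: divide_inverse algebra_simps)
lemma t2: fixes C A B mu D :: complex shows "C * (A - 1) * ((B - 1) * mu) / D = (mu / D) * (C * (A - 1) * (B - 1))"
  by (simp add: divide_inverse algebra_simps)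

lemma powi2: "(x :: complex) powi (2 * k) = (x\<^sup>2) powi k"
  by (simp add: power_int_mult)

lemma phi_term:
  fixes la mu C :: complex
  assumes "la \<noteq> 0" "\<alpha> \<noteq> 0"
  shows "C * of_int (sgn \<alpha>) * (1 - mu powi (2 * \<beta>)) *
      ((la ^ (2 * nat \<bar>\<alpha>\<bar>) - 1) * la powi \<alpha>) / (la ^ (nat \<bar>\<alpha>\<bar> - 1) * (la\<^sup>2 - 1))
    = - (la / (la\<^sup>2 - 1)) * (C * ((la\<^sup>2) powi \<alpha> - 1) * ((mu\<^sup>2) powi \<beta> - 1))"
  unfolding re1 core[OF assms] powi2 by (rule t1)

lemma psi_term:
  fixes la mu C :: complex
  assumes "mu \<noteq> 0" "\<beta> \<noteq> 0"
  shows "C * of_int (sgn \<beta>) * (la powi (2 * \<alpha>) - 1) *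
      ((mu ^ (2 * nat \<bar>\<beta>\<bar>) - 1) * mu powi \<beta>) / (mu ^ (nat \<bar>\<beta>\<bar> - 1) * (mu\<^sup>2 - 1))
    = (mu / (mu\<^sup>2 - 1)) * (C * ((la\<^sup>2) powi \<alpha> - 1) * ((mu\<^sup>2) powi \<beta> - 1))"
  unfolding re1 core[OF assms] powi2 by (rule t2)

definition GG :: "letter list \<Rightarrow> complex \<Rightarrow> complex \<Rightarrow> complex" where
  "GG w u v = (\<Sum>p\<in>Supp w. of_int (R w p) * (u powi fst p - 1) * (v powi snd p - 1))"

lemma Supp_props: "w \<in> F_1 \<Longrightarrow> finite (Supp w) \<and> (\<forall>p\<in>Supp w. fst p \<noteq> 0 \<and> snd p \<noteq> 0)"
proof -
  assume "w \<in> F_1"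
  then have "reduced_expr (red_expr_of w)" using red_expr_of F_1_sub_K by blast
  then show ?thesis by (auto simp: Supp_def reduced_expr_def)
qed

lemma Phi_eq: assumes w: "w \<in> F_1" and la: "la \<noteq> 0"
  shows "Phi w la mu = - (la / (la\<^sup>2 - 1)) * GG w (la\<^sup>2) (mu\<^sup>2)"
  unfolding Phi_def GG_def sum_distrib_left
proof (rule sum.cong[OF refl])
  fix p assume p: "p \<in> Supp w"
  obtain a b where ab: "p = (a, b)" by (cases p)
  have "a \<noteq> 0" using Supp_props[OF w] p ab by auto
  then show "(case p of (\<alpha>, \<beta>) \<Rightarrow> complex_of_int (R w (\<alpha>, \<beta>)) * complex_of_int (sgn \<alpha>) * (1 - mu powi (2 * \<beta>)) *
          ((la ^ (2 * nat \<bar>\<alpha>\<bar>) - 1) * la powi \<alpha>) / (la ^ (nat \<bar>\<alpha>\<bar> - 1) * (la\<^sup>2 - 1))) =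
         - (la / (la\<^sup>2 - 1)) * (complex_of_int (R w p) * (la\<^sup>2 powi fst p - 1) * (mu\<^sup>2 powi snd p - 1))"
    unfolding ab using phi_term[OF la] by simp
qed

lemma Psi_eq: assumes w: "w \<in> F_1" and mu: "mu \<noteq> 0"
  shows "Psi w la mu = (mu / (mu\<^sup>2 - 1)) * GG w (la\<^sup>2) (mu\<^sup>2)"
  unfolding Psi_def GG_def sum_distrib_left
proof (rule sum.cong[OF refl])
  fix p assume p: "p \<in> Supp w"
  obtain a b where ab: "p = (a, b)" by (cases p)
  have "b \<noteq> 0" using Supp_props[OF w] p ab by auto
  then show "(case p of (\<alpha>, \<beta>) \<Rightarrow> complex_of_int (R w (\<alpha>, \<beta>)) * complex_of_int (sgn \<beta>) * (la powi (2 * \<alpha>) - 1) *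
          ((mu ^ (2 * nat \<bar>\<beta>\<bar>) - 1) * mu powi \<beta>) / (mu ^ (nat \<bar>\<beta>\<bar> - 1) * (mu\<^sup>2 - 1))) =
         (mu / (mu\<^sup>2 - 1)) * (complex_of_int (R w p) * (la\<^sup>2 powi fst p - 1) * (mu\<^sup>2 powi snd p - 1))"
    unfolding ab using psi_term[OF mu] by simp
qed

theorem proposition6p2:
  assumes "w \<in> F_1" and "w \<notin> F_2'"
  shows "(\<exists>la mu. good_pt la mu \<and> Phi w la mu \<noteq> 0)
       \<and> (\<exists>la mu. good_pt la mu \<and> Psi w la mu \<noteq> 0)
       \<and> (\<forall>a b :: complex. (\<forall>la mu. good_pt la mu \<longrightarrow> a * Phi w la mu + b * Psi w la mu = 0)
                            \<longrightarrow> a = 0 \<and> b = 0)"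
proof -
  obtain p0 where p0: "p0 \<in> Supp w" "R w p0 \<noteq> 0" using R_nonzero assms by blast
  have SP: "finite (Supp w)" "\<And>p. p \<in> Supp w \<Longrightarrow> fst p \<noteq> 0 \<and> snd p \<noteq> 0" using Supp_props[OF assms(1)] by auto
  obtain u v where uv: "u \<notin> {0, 1}" "v \<notin> {0, 1}" "GG w u v \<noteq> 0"
    using G_nonzero[OF SP(1) SP(2), of p0 "\<lambda>p. of_int (R w p)"] p0 unfolding GG_def by auto
  define la where "la = csqrt u"
  define mu where "mu = csqrt v"
  have sq: "la\<^sup>2 = u" "mu\<^sup>2 = v" by (simp_all add: la_def mu_def)
  have good: "good_pt la mu" using uv sq by (auto simp: good_pt_def)
  have nz: "la \<noteq> 0" "mu \<noteq> 0" "la\<^sup>2 - 1 \<noteq> 0" "mu\<^sup>2 - 1 \<noteq> 0" using good by (auto simp: good_pt_def)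
  have Ph: "Phi w la mu \<noteq> 0" using Phi_eq[OF assms(1) nz(1)] uv sq nz by simp
  have Ps: "Psi w la mu \<noteq> 0" using Psi_eq[OF assms(1) nz(2)] uv sq nz by simp
  have good': "good_pt (- la) mu" using good by (auto simp: good_pt_def)
  have Ph': "Phi w (- la) mu = - Phi w la mu" using Phi_eq[OF assms(1)] nz by simp
  have Ps': "Psi w (- la) mu = Psi w la mu" using Psi_eq[OF assms(1)] nz by simp
  have indep: "a = 0 \<and> b = 0" if h: "\<forall>la mu. good_pt la mu \<longrightarrow> a * Phi w la mu + b * Psi w la mu = 0" for a b :: complex
  proof -
    have e1: "a * Phi w la mu + b * Psi w la mu = 0" using h good by blast
    have e2: "- (a * Phi w la mu) + b * Psi w la mu = 0" using h good' Ph' Ps' by (metis mult_minus_right)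
    have "2 * (a * Phi w la mu) = (a * Phi w la mu + b * Psi w la mu) - (- (a * Phi w la mu) + b * Psi w la mu)"
      by (simp add: algebra_simps)
    then have "a * Phi w la mu = 0" using e1 e2 by simp
    then have a: "a = 0" using Ph by simp
    then have "b = 0" using e1 Ps by simp
    then show ?thesis using a by simp
  qed
  show ?thesis using good Ph Ps indep by blast
qed


end
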